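(* Let $D$ be a (nondeterministic or stochastic) planning domain, let $\psi$ be an LTL formula or an LTL$_f$ formula over $AP=\mathcal{F}\cup\mathcal{A}$, and let $f$ be a finite-state policy. If $(D,f)\models A^{\text{sa-fair}}(\psi)$, then $(D,f)\models A^{=1}(\psi)$.
   Context: A nondeterministic planning domain is a tuple $D=(St,Act,s_0,Tr)$ with $St=2^{\mathcal{F}}$ a finite set of states (assignments to Boolean fluents $\mathcal{F}$), $Act=2^{\mathcal{A}}$ a finite set of actions (assignments to Boolean variables $\mathcal{A}$ disjoint from $\mathcal{F}$), initial state $s_0$, and transition relation $Tr\subseteq St\times Act\times St$; action $a$ is applicable in $s$ if $Tr(s,a)=\{s': (s,a,s')\in Tr\}\neq\emptyset$, and every state has an applicable action. A stochastic domain is a pair $(D,Pr)$ where $Pr(s,a)$ is a probability distribution on $St$ whose support equals $Tr(s,a)$, for each applicable $a$ in $s$. A trace is a finite or infinite sequence $(s_0\cup a_0)(s_1\cup a_1)\cdots$ over $2^{\mathcal{F}\cup\mathcal{A}}$ starting at $s_0$ with $(s_{i-1},a_{i-1},s_i)\in Tr$. A policy is a function $f:St^+\to Act$ with $f(u)$ applicable in the last state of $u$; a trace is an $f$-trace if $f(s_0\cdots s_i)=a_i$ for every prefix. A finite-state policy is one computed by a finite-state input/output automaton. LTL has the usual syntax ($p$, $\neg$, $\wedge$, $X$ (next), $U$ (until)) and semantics over infinite sequences over $2^{AP}$; LTL$_f$ has the same syntax interpreted over finite sequences, with $X\psi$ true at $j$ only if $j+1$ is a position of the sequence. An infinite trace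 is said to satisfy an LTL$_f$ formula if some finite prefix of it satisfies it. An infinite trace is state-action fair if for every $(s,a,s')\in Tr$, if the pair $s,a$ (state $s$ with action $a$) occurs infinitely often then the step $s,a$ followed by state $s'$ occurs infinitely often. $(D,f)\models A^{\text{sa-fair}}\psi$ means every infinite state-action fair $f$-trace satisfies $\psi$. For a stochastic domain, $D$ and $f$ induce a Markov chain and hence a probability measure on infinite $f$-traces; $(D,f)\models A^{=1}\psi$ means the set of infinite $f$-traces satisfying $\psi$ has probability $1$. This does not depend on the actual probabilities but only on their supports, so for a nondeterministic domain $D$, $(D,f)\models A^{=1}\psi$ is defined as $(D',f)\models A^{=1}\psi$ for any stochastic domain $D'$ whose induced nondeterministic domain is $D$. *)

theory Defs
  imports "HOL-Probability.Probability"
begin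

text \<open>Fluents have type 'f, action variables type 'v; states are 'f sets, actions 'v sets.
  The atomic propositions are AP = F \<union> A, rendered as the disjoint sum 'f + 'v.
  A domain is given by its initial state s0 and transition relation Tr.\<close>

definition applicable :: "('s \<times> 'a \<times> 's) set \<Rightarrow> 's \<Rightarrow> 'a \<Rightarrow> bool" where
  "applicable Tr s a \<longleftrightarrow> {s'. (s, a, s') \<in> Tr} \<noteq> {}"

definition planning_domain :: "('s \<times> 'a \<times> 's) set \<Rightarrow> bool" where
  "planning_domain Tr \<longleftrightarrow> (\<forall>s. \<exists>a. applicable Tr s a)"

definition stochastic_for :: "('s \<times> 'a \<times> 's) set \<Rightarrow> ('s \<Rightarrow> 'a \<Rightarrow> 's pmf) \<Rightarrow> bool" where
  "stochastic_for Tr Pr \<longleftrightarrow>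
     (\<forall>s a. applicable Tr s a \<longrightarrow> set_pmf (Pr s a) = {s'. (s, a, s') \<in> Tr})"

definition is_policy :: "('s \<times> 'a \<times> 's) set \<Rightarrow> ('s list \<Rightarrow> 'a) \<Rightarrow> bool" where
  "is_policy Tr f \<longleftrightarrow> (\<forall>u. u \<noteq> [] \<longrightarrow> applicable Tr (last u) (f u))"

definition finite_state_policy :: "('s list \<Rightarrow> 'a) \<Rightarrow> bool" where
  "finite_state_policy f \<longleftrightarrow>
     (\<exists>(Q :: nat set) q0 (\<delta> :: nat \<Rightarrow> 's \<Rightarrow> nat) (out :: nat \<Rightarrow> 'a).
        finite Q \<and> q0 \<in> Q \<and> (\<forall>q\<in>Q. \<forall>s. \<delta> q s \<in> Q) \<and>
        (\<forall>u. u \<noteq> [] \<longrightarrow> f u = out (foldl \<delta> q0 u)))"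

text \<open>Infinite traces are streams of (state, action) pairs (s_i, a_i).\<close>
definition inf_f_trace ::
  "'s \<Rightarrow> ('s \<times> 'a \<times> 's) set \<Rightarrow> ('s list \<Rightarrow> 'a) \<Rightarrow> ('s \<times> 'a) stream \<Rightarrow> bool" where
  "inf_f_trace s0 Tr f \<omega> \<longleftrightarrow>
     fst (\<omega> !! 0) = s0 \<and>
     (\<forall>i. (fst (\<omega> !! i), snd (\<omega> !! i), fst (\<omega> !! Suc i)) \<in> Tr) \<and>
     (\<forall>i. snd (\<omega> !! i) = f (map fst (stake (Suc i) \<omega>)))"

definition sa_fair :: "('s \<times> 'a \<times> 's) set \<Rightarrow> ('s \<times> 'a) stream \<Rightarrow> bool" where
  "sa_fair Tr \<omega> \<longleftrightarrow>
     (\<forall>s a s'. (s, a, s') \<in> Tr \<longrightarrow>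
        infinite {i. \<omega> !! i = (s, a)} \<longrightarrow>
        infinite {i. \<omega> !! i = (s, a) \<and> fst (\<omega> !! Suc i) = s'})"

definition letter :: "'f set \<times> 'v set \<Rightarrow> ('f + 'v) set" where
  "letter x = Inl ` fst x \<union> Inr ` snd x"

datatype 'p ltl = Prop 'p | Neg "'p ltl" | Conj "'p ltl" "'p ltl" | Next "'p ltl" | Until "'p ltl" "'p ltl"

primrec ltl_sat :: "(nat \<Rightarrow> 'p set) \<Rightarrow> nat \<Rightarrow> 'p ltl \<Rightarrow> bool" where
  "ltl_sat w j (Prop p) \<longleftrightarrow> p \<in> w j"
| "ltl_sat w j (Neg \<phi>) \<longleftrightarrow> \<not> ltl_sat w j \<phi>"
| "ltl_sat w j (Conj \<phi> \<psi>) \<longleftrightarrow> ltl_sat w j \<phi> \<and> ltl_sat w j \<psi>"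
| "ltl_sat w j (Next \<phi>) \<longleftrightarrow> ltl_sat w (Suc j) \<phi>"
| "ltl_sat w j (Until \<phi> \<psi>) \<longleftrightarrow> (\<exists>k\<ge>j. ltl_sat w k \<psi> \<and> (\<forall>i. j \<le> i \<and> i < k \<longrightarrow> ltl_sat w i \<phi>))"

primrec ltlf_sat :: "'p set list \<Rightarrow> nat \<Rightarrow> 'p ltl \<Rightarrow> bool" where
  "ltlf_sat w j (Prop p) \<longleftrightarrow> p \<in> w ! j"
| "ltlf_sat w j (Neg \<phi>) \<longleftrightarrow> \<not> ltlf_sat w j \<phi>"
| "ltlf_sat w j (Conj \<phi> \<psi>) \<longleftrightarrow> ltlf_sat w j \<phi> \<and> ltlf_sat w j \<psi>"
| "ltlf_sat w j (Next \<phi>) \<longleftrightarrow> Suc j < length w \<and> ltlf_sat w (Suc j) \<phi>"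
| "ltlf_sat w j (Until \<phi> \<psi>) \<longleftrightarrow>
     (\<exists>k. j \<le> k \<and> k < length w \<and> ltlf_sat w k \<psi> \<and> (\<forall>i. j \<le> i \<and> i < k \<longrightarrow> ltlf_sat w i \<phi>))"

datatype 'p goal = LTL "'p ltl" | LTLf "'p ltl"

fun goal_sat :: "'p goal \<Rightarrow> (nat \<Rightarrow> 'p set) \<Rightarrow> bool" where
  "goal_sat (LTL \<phi>) w \<longleftrightarrow> ltl_sat w 0 \<phi>"
| "goal_sat (LTLf \<phi>) w \<longleftrightarrow> (\<exists>n>0. ltlf_sat (map w [0..<n]) 0 \<phi>)"

definition trace_sat :: "('f + 'v) goal \<Rightarrow> ('f set \<times> 'v set) stream \<Rightarrow> bool" where
  "trace_sat \<psi> \<omega> \<longleftrightarrow> goal_sat \<psi> (\<lambda>i. letter (\<omega> !! i))"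

definition A_sa_fair ::
  "'f set \<Rightarrow> ('f set \<times> 'v set \<times> 'f set) set \<Rightarrow> ('f set list \<Rightarrow> 'v set) \<Rightarrow> ('f + 'v) goal \<Rightarrow> bool" where
  "A_sa_fair s0 Tr f \<psi> \<longleftrightarrow>
     (\<forall>\<omega>. inf_f_trace s0 Tr f \<omega> \<and> sa_fair Tr \<omega> \<longrightarrow> trace_sat \<psi> \<omega>)"

text \<open>Probability of the cylinder of a finite prefix w = (s0,a0)...(sn,an) in the Markov chain
  induced by the domain, Pr and f.\<close>
definition cyl_prob ::
  "'s \<Rightarrow> ('s \<Rightarrow> 'a \<Rightarrow> 's pmf) \<Rightarrow> ('s list \<Rightarrow> 'a) \<Rightarrow> ('s \<times> 'a) list \<Rightarrow> real" where
  "cyl_prob s0 Pr f w =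
     (if fst (w ! 0) = s0 \<and> (\<forall>i<length w. snd (w ! i) = f (map fst (take (Suc i) w)))
      then (\<Prod>i<length w - 1. pmf (Pr (fst (w ! i)) (snd (w ! i))) (fst (w ! Suc i)))
      else 0)"

text \<open>M is the (unique) probability measure on infinite traces induced by the Markov chain:
  it lives on the stream sigma-algebra and gives each prefix cylinder its chain probability.\<close>
definition trace_measure ::
  "'s \<Rightarrow> ('s \<Rightarrow> 'a \<Rightarrow> 's pmf) \<Rightarrow> ('s list \<Rightarrow> 'a) \<Rightarrow> ('s \<times> 'a) stream measure \<Rightarrow> bool" where
  "trace_measure s0 Pr f M \<longleftrightarrow>
     prob_space M \<and> sets M = sets (stream_space (count_space UNIV)) \<and>
     (\<forall>w. w \<noteq> [] \<longrightarrow>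
        emeasure M {\<omega> \<in> space M. stake (length w) \<omega> = w} = ennreal (cyl_prob s0 Pr f w))"

definition A_almost_sure ::
  "'f set \<Rightarrow> ('f set \<times> 'v set \<times> 'f set) set \<Rightarrow> ('f set list \<Rightarrow> 'v set) \<Rightarrow> ('f + 'v) goal \<Rightarrow> bool" where
  "A_almost_sure s0 Tr f \<psi> \<longleftrightarrow>
     (\<forall>Pr M. stochastic_for Tr Pr \<longrightarrow> trace_measure s0 Pr f M \<longrightarrow>
        emeasure M {\<omega> \<in> space M. inf_f_trace s0 Tr f \<omega> \<and> trace_sat \<psi> \<omega>} = 1)"

end

theory Submission
  imports Defs
begin


lemma pred_stake:
  "Measurable.pred (stream_space (count_space UNIV)) (\<lambda>\<omega>::('a::countable) stream. Q (stake n \<omega>))"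
  by measurable

lemma stake_map_upt: "stake n \<omega> = map ((!!) \<omega>) [0..<n]"
  by (induct n) (simp_all add: stake_Suc del: stake.simps(2))

lemma pred_ltl:
  "Measurable.pred (stream_space (count_space UNIV))
     (\<lambda>\<omega>::('f::finite set \<times> 'v::finite set) stream. ltl_sat (\<lambda>i. letter (\<omega> !! i)) j \<phi>)"
proof (induction \<phi> arbitrary: j)
  case (Prop p)
  then show ?case by simp measurable
next
  case (Neg \<phi>)
  then show ?case by simp measurable
next
  case (Conj \<phi>1 \<phi>2)
  then show ?case by simp measurable
next
  case (Next \<phi>)
  then show ?case by simp
next
  case (Until \<phi>1 \<phi>2)
  then show ?case by simp measurable
qed

lemma pred_goal:
  "Measurable.pred (stream_space (count_space UNIV))
     (\<lambda>\<omega>::('f::finite set \<times> 'v::finite set) stream. trace_sat \<psi> \<omega>)"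
proof (cases \<psi>)
  case (LTL x1)
  then show ?thesis unfolding trace_sat_def using pred_ltl by simp
next
  case (LTLf x2)
  have "\<And>\<omega>::('f set \<times> 'v set) stream. \<And>n. map (\<lambda>i. letter (\<omega> !! i)) [0..<n] = map letter (stake n \<omega>)"
    by (simp add: stake_map_upt) 
  then show ?thesis unfolding trace_sat_def using LTLf by simp measurable
qed

lemma pred_trace:
  "Measurable.pred (stream_space (count_space UNIV))
     (\<lambda>\<omega>::('s::countable \<times> 'a::countable) stream. inf_f_trace s0 Tr f \<omega>)"
proof -
  have e: "inf_f_trace s0 Tr f \<omega> \<longleftrightarrow> (\<lambda>w. fst (w!0) = s0) (stake 1 \<omega>) \<and>
     (\<forall>i. (\<lambda>w. (fst (w ! i), snd (w ! i), fst (w ! Suc i)) \<in> Tr) (stake (Suc (Suc i)) \<omega>)) \<and>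
     (\<forall>i. (\<lambda>w. snd (w ! i) = f (map fst w)) (stake (Suc i) \<omega>))" for \<omega> :: "('s \<times> 'a) stream"
    unfolding inf_f_trace_def by (simp del: stake.simps(2))
  show ?thesis unfolding e
    by (intro pred_intros_logic pred_intros_countable pred_stake)
qed




definition occ :: "nat \<Rightarrow> 's \<Rightarrow> 'a \<Rightarrow> ('s \<times> 'a) list \<Rightarrow> nat \<Rightarrow> bool" where
  "occ N s a w i \<longleftrightarrow> N \<le> i \<and> Suc i < length w \<and> w ! i = (s, a)"

definition cnt :: "nat \<Rightarrow> 's \<Rightarrow> 'a \<Rightarrow> ('s \<times> 'a) list \<Rightarrow> nat" where
  "cnt N s a w = card {i. occ N s a w i}"

definition okw :: "nat \<Rightarrow> 's \<Rightarrow> 'a \<Rightarrow> 's \<Rightarrow> ('s \<times> 'a) list \<Rightarrow> bool" where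
  "okw N s a s' w \<longleftrightarrow> (\<forall>i. occ N s a w i \<longrightarrow> fst (w ! Suc i) \<noteq> s')"

lemma occ_snoc:
  assumes "w \<noteq> []"
  shows "occ N s a (w @ [x]) i \<longleftrightarrow> occ N s a w i \<or> (i = length w - 1 \<and> N \<le> i \<and> last w = (s, a))"
proof (cases "Suc i < length w")
  case True
  then show ?thesis using assms unfolding occ_def by (auto simp: nth_append last_conv_nth)
next
  case False
  have l: "last w = w ! (length w - 1)" using assms by (simp add: last_conv_nth)
  show ?thesis
  proof (cases "i = length w - 1")
    case True
    then show ?thesis using assms False unfolding occ_def l by (auto simp: nth_append)
  next
    case F2: False
    then have "\<not> i < length w" using False by linarith
    then show ?thesis using F2 False unfolding occ_def by (auto simp: nth_append)
  qed
qed

lemma finite_occ: "finite {i. occ N s a w i}"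
  unfolding occ_def by (rule finite_subset[of _ "{..<length w}"]) auto

lemma cnt_snoc:
  assumes "w \<noteq> []"
  shows "cnt N s a (w @ [x]) = cnt N s a w + (if N \<le> length w - 1 \<and> last w = (s, a) then 1 else 0)"
proof -
  have nin: "length w - 1 \<notin> {i. occ N s a w i}" unfolding occ_def using assms by auto
  show ?thesis
  proof (cases "N \<le> length w - 1 \<and> last w = (s, a)")
    case True
    then have "{i. occ N s a (w @ [x]) i} = insert (length w - 1) {i. occ N s a w i}"
      using occ_snoc[OF assms] by auto
    then show ?thesis using True nin finite_occ[of N s a w] unfolding cnt_def by (simp only: card_insert_disjoint) simp
  next
    case False
    then have "{i. occ N s a (w @ [x]) i} = {i. occ N s a w i}"
      using occ_snoc[OF assms] by auto
    then show ?thesis using False unfolding cnt_def by simp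
  qed
qed

lemma okw_snoc:
  assumes "w \<noteq> []"
  shows "okw N s a s' (w @ [x]) \<longleftrightarrow> okw N s a s' w \<and> (N \<le> length w - 1 \<and> last w = (s, a) \<longrightarrow> fst x \<noteq> s')"
proof -
  have a: "(w @ [x]) ! Suc i = w ! Suc i" if "occ N s a w i" for i
    using that unfolding occ_def by (simp add: nth_append)
  have b: "(w @ [x]) ! Suc (length w - 1) = x" using assms by (simp add: nth_append)
  show ?thesis
  proof
    assume L: "okw N s a s' (w @ [x])"
    show "okw N s a s' w \<and> (N \<le> length w - 1 \<and> last w = (s, a) \<longrightarrow> fst x \<noteq> s')"
    proof (intro conjI impI)
      show "okw N s a s' w" unfolding okw_def
      proof (intro allI impI)
        fix i assume "occ N s a w i"
        then show "fst (w ! Suc i) \<noteq> s'" using L a[of i] occ_snoc[OF assms, of N s a x i]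
          unfolding okw_def by auto
      qed
      assume "N \<le> length w - 1 \<and> last w = (s, a)"
      then show "fst x \<noteq> s'" using L b occ_snoc[OF assms, of N s a x "length w - 1"]
        unfolding okw_def by auto
    qed
  next
    assume R: "okw N s a s' w \<and> (N \<le> length w - 1 \<and> last w = (s, a) \<longrightarrow> fst x \<noteq> s')"
    show "okw N s a s' (w @ [x])" unfolding okw_def
    proof (intro allI impI)
      fix i assume "occ N s a (w @ [x]) i"
      then have "occ N s a w i \<or> (i = length w - 1 \<and> N \<le> i \<and> last w = (s, a))"
        using occ_snoc[OF assms] by auto
      then show "fst ((w @ [x]) ! Suc i) \<noteq> s'"
        using R a b unfolding okw_def by auto
    qed
  qed
qed

lemma occ_stake: "occ N s a (stake T \<omega>) i \<longleftrightarrow> N \<le> i \<and> Suc i < T \<and> \<omega> !! i = (s, a)"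
  unfolding occ_def by auto

lemma cyl_prob_nonneg: "cyl_prob s0 Pr f w \<ge> 0"
  unfolding cyl_prob_def by (auto intro: prod_nonneg)

lemma cyl_prob_snoc:
  assumes "w \<noteq> []"
  shows "cyl_prob s0 Pr f (w @ [x]) =
    (if snd x = f (map fst w @ [fst x]) then cyl_prob s0 Pr f w * pmf (Pr (fst (last w)) (snd (last w))) (fst x) else 0)"
proof -
  let ?n = "length w"
  have h0: "(w @ [x]) ! 0 = w ! 0" using assms by (simp add: nth_append)
  have cond: "(\<forall>i<length (w @ [x]). snd ((w @ [x]) ! i) = f (map fst (take (Suc i) (w @ [x])))) \<longleftrightarrow>
     (\<forall>i<?n. snd (w ! i) = f (map fst (take (Suc i) w))) \<and> snd x = f (map fst w @ [fst x])"
    (is "?L \<longleftrightarrow> ?R")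
  proof
    assume L: ?L
    have "snd (w ! i) = f (map fst (take (Suc i) w))" if "i < ?n" for i
      using L[rule_format, of i] that by (simp add: nth_append)
    moreover have "snd x = f (map fst w @ [fst x])" using L[rule_format, of ?n] by simp
    ultimately show ?R by blast
  next
    assume R: ?R
    show ?L
    proof (intro allI impI)
      fix i assume "i < length (w @ [x])"
      then have "i < ?n \<or> i = ?n" by auto
      then show "snd ((w @ [x]) ! i) = f (map fst (take (Suc i) (w @ [x])))"
        using R by (auto simp: nth_append)
    qed
  qed
  have prod: "(\<Prod>i<length (w @ [x]) - 1. pmf (Pr (fst ((w @ [x]) ! i)) (snd ((w @ [x]) ! i))) (fst ((w @ [x]) ! Suc i)))
     = (\<Prod>i<?n - 1. pmf (Pr (fst (w ! i)) (snd (w ! i))) (fst (w ! Suc i))) * pmf (Pr (fst (last w)) (snd (last w))) (fst x)"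
  proof -
    obtain m where m: "?n = Suc m" using assms by (cases w) auto
    have "(\<Prod>i<length (w @ [x]) - 1. pmf (Pr (fst ((w @ [x]) ! i)) (snd ((w @ [x]) ! i))) (fst ((w @ [x]) ! Suc i)))
      = (\<Prod>i<Suc m. pmf (Pr (fst ((w @ [x]) ! i)) (snd ((w @ [x]) ! i))) (fst ((w @ [x]) ! Suc i)))"
      using m by simp
    also have "\<dots> = (\<Prod>i<m. pmf (Pr (fst ((w @ [x]) ! i)) (snd ((w @ [x]) ! i))) (fst ((w @ [x]) ! Suc i)))
       * pmf (Pr (fst ((w @ [x]) ! m)) (snd ((w @ [x]) ! m))) (fst ((w @ [x]) ! Suc m))"
      by simp
    also have "(\<Prod>i<m. pmf (Pr (fst ((w @ [x]) ! i)) (snd ((w @ [x]) ! i))) (fst ((w @ [x]) ! Suc i)))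
       = (\<Prod>i<m. pmf (Pr (fst (w ! i)) (snd (w ! i))) (fst (w ! Suc i)))"
      by (rule prod.cong) (use m in \<open>auto simp: nth_append\<close>)
    also have "pmf (Pr (fst ((w @ [x]) ! m)) (snd ((w @ [x]) ! m))) (fst ((w @ [x]) ! Suc m))
       = pmf (Pr (fst (last w)) (snd (last w))) (fst x)"
      using m assms by (simp add: nth_append last_conv_nth)
    finally show ?thesis using m by simp
  qed
  show ?thesis
    unfolding cyl_prob_def h0 cond prod using assms by auto
qed



definition LL :: "nat \<Rightarrow> ('s::finite \<times> 'a::finite) list set" where
  "LL n = {w. length w = n}"

lemma finite_LL: "finite (LL n :: ('s::finite \<times> 'a::finite) list set)"
  unfolding LL_def using finite_lists_length_eq[of "UNIV :: ('s \<times> 'a) set" n] by simp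

lemma sum_LL_Suc:
  fixes g :: "('s::finite \<times> 'a::finite) list \<Rightarrow> 'b::comm_monoid_add"
  shows "(\<Sum>w\<in>LL (Suc n). g w) = (\<Sum>w\<in>LL n. \<Sum>x\<in>UNIV. g (w @ [x]))"
proof -
  have img: "LL (Suc n) = (\<lambda>(w, x). w @ [x]) ` (LL n \<times> UNIV)"
  proof
    show "LL (Suc n) \<subseteq> (\<lambda>(w, x). w @ [x]) ` (LL n \<times> UNIV)"
    proof
      fix w' assume "w' \<in> LL (Suc n)"
      then have "length w' = Suc n" unfolding LL_def by simp
      then have ne: "w' \<noteq> []" "butlast w' \<in> LL n"
        unfolding LL_def by auto
      then have "w' = butlast w' @ [last w']" by simp
      then show "w' \<in> (\<lambda>(w, x). w @ [x]) ` (LL n \<times> UNIV)"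
        by (intro image_eqI[of _ _ "(butlast w', last w')"]) (use ne in auto)
    qed
  qed (auto simp: LL_def)
  have inj: "inj_on (\<lambda>(w, x). w @ [x]) (LL n \<times> UNIV)"
    by (auto simp: inj_on_def)
  have "(\<Sum>w\<in>LL (Suc n). g w) = (\<Sum>p\<in>LL n \<times> UNIV. g ((\<lambda>(w, x). w @ [x]) p))"
    unfolding img by (rule sum.reindex[OF inj, unfolded comp_def])
  also have "\<dots> = (\<Sum>w\<in>LL n. \<Sum>x\<in>UNIV. g (w @ [x]))"
    by (subst sum.cartesian_product) (simp add: case_prod_beta)
  finally show ?thesis .
qed

lemma sum_cyl_snoc:
  fixes w :: "('s::finite \<times> 'a::finite) list"
  assumes "w \<noteq> []"
  shows "(\<Sum>x\<in>UNIV. cyl_prob s0 Pr f (w @ [x]) * h (fst x)) =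
     cyl_prob s0 Pr f w * (\<Sum>t\<in>UNIV. pmf (Pr (fst (last w)) (snd (last w))) t * h t)"
proof -
  let ?P = "Pr (fst (last w)) (snd (last w))"
  have "(\<Sum>x\<in>UNIV. cyl_prob s0 Pr f (w @ [x]) * h (fst x)) =
        (\<Sum>x\<in>UNIV \<times> UNIV. cyl_prob s0 Pr f (w @ [x]) * h (fst x))"
    by (simp add: UNIV_Times_UNIV)
  also have "\<dots> = (\<Sum>t\<in>UNIV. \<Sum>b\<in>UNIV. cyl_prob s0 Pr f (w @ [(t, b)]) * h t)"
    by (unfold sum.cartesian_product) (rule sum.cong, auto)
  also have "\<dots> = (\<Sum>t\<in>UNIV. cyl_prob s0 Pr f w * pmf ?P t * h t)"
  proof (rule sum.cong[OF refl])
    fix t :: 's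
    have "(\<Sum>b\<in>UNIV. cyl_prob s0 Pr f (w @ [(t, b)]) * h t) =
          (\<Sum>b\<in>UNIV. if b = f (map fst w @ [t]) then cyl_prob s0 Pr f w * pmf ?P t * h t else 0)"
      by (rule sum.cong[OF refl]) (simp add: cyl_prob_snoc[OF assms])
    also have "\<dots> = cyl_prob s0 Pr f w * pmf ?P t * h t"
      by (subst sum.delta) simp_all
    finally show "(\<Sum>b\<in>UNIV. cyl_prob s0 Pr f (w @ [(t, b)]) * h t) = cyl_prob s0 Pr f w * pmf ?P t * h t" .
  qed
  also have "\<dots> = cyl_prob s0 Pr f w * (\<Sum>t\<in>UNIV. pmf ?P t * h t)"
    by (simp add: sum_distrib_left mult.assoc)
  finally show ?thesis .
qed

lemma sum_pmf_UNIV: "(\<Sum>t\<in>(UNIV::'s::finite set). pmf P t) = 1"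
  by (rule sum_pmf_eq_1) auto

lemma sum_pmf_neq: "(\<Sum>t\<in>(UNIV::'s::finite set). pmf P t * (if t \<noteq> s' then c else 0)) = (1 - pmf P s') * c"
proof -
  have "(\<Sum>t\<in>(UNIV::'s set). pmf P t * (if t \<noteq> s' then c else 0)) = (\<Sum>t\<in>UNIV - {s'}. pmf P t) * c"
    by (subst sum.remove[of _ s']) (auto simp: sum_distrib_right intro!: sum.cong)
  also have "(\<Sum>t\<in>UNIV - {s'}. pmf P t) = 1 - pmf P s'"
    using sum.remove[of UNIV s' "pmf P"] sum_pmf_UNIV[of P] by simp
  finally show ?thesis .
qed

definition Phi where
  "Phi s0 Pr f N s a s' k w = cyl_prob s0 Pr f w *
     (if okw N s a s' w then (1 - pmf (Pr s a) s') ^ (k - cnt N s a w) else 0)"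

lemma Phi_nonneg: "Phi s0 Pr f N s a s' k w \<ge> 0"
proof -
  have "0 \<le> 1 - pmf (Pr s a) s'" using pmf_le_1[of "Pr s a" s'] by simp
  then show ?thesis unfolding Phi_def using cyl_prob_nonneg by (auto intro!: mult_nonneg_nonneg)
qed

lemma Phi_step:
  fixes w :: "('s::finite \<times> 'a::finite) list"
  assumes "w \<noteq> []"
  shows "(\<Sum>x\<in>UNIV. Phi s0 Pr f N s a s' k (w @ [x])) \<le> Phi s0 Pr f N s a s' k w"
proof -
  let ?q = "1 - pmf (Pr s a) s'"
  let ?fl = "N \<le> length w - 1 \<and> last w = (s, a)"
  let ?c = "cnt N s a w"
  define h where "h t = (if okw N s a s' w \<and> (?fl \<longrightarrow> t \<noteq> s')
      then ?q ^ (k - (?c + (if ?fl then 1 else 0))) else 0)" for t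
  have "Phi s0 Pr f N s a s' k (w @ [x]) = cyl_prob s0 Pr f (w @ [x]) * h (fst x)" for x
    unfolding Phi_def h_def okw_snoc[OF assms] cnt_snoc[OF assms] by simp
  then have "(\<Sum>x\<in>UNIV. Phi s0 Pr f N s a s' k (w @ [x])) =
      cyl_prob s0 Pr f w * (\<Sum>t\<in>UNIV. pmf (Pr (fst (last w)) (snd (last w))) t * h t)"
    using sum_cyl_snoc[OF assms, of s0 Pr f h] by simp
  also have "\<dots> \<le> Phi s0 Pr f N s a s' k w"
  proof (cases "okw N s a s' w")
    case False
    then show ?thesis unfolding h_def Phi_def by simp
  next
    case ok: True
    show ?thesis
    proof (cases ?fl)
      case False
      then have "h t = ?q ^ (k - ?c)" for t using ok unfolding h_def by auto
      then have "(\<Sum>t\<in>UNIV. pmf (Pr (fst (last w)) (snd (last w))) t * h t) = ?q ^ (k - ?c)"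
        by (simp add: sum_distrib_right[symmetric] sum_pmf_UNIV)
      then show ?thesis using ok unfolding Phi_def by simp
    next
      case True
      then have la: "Pr (fst (last w)) (snd (last w)) = Pr s a" by simp
      have "(\<Sum>t\<in>UNIV. pmf (Pr (fst (last w)) (snd (last w))) t * h t) = ?q * ?q ^ (k - (?c + 1))"
        unfolding la using ok True sum_pmf_neq[of "Pr s a" s' "?q ^ (k - (?c + 1))"]
        unfolding h_def by simp
      also have "\<dots> \<le> ?q ^ (k - ?c)"
      proof (cases "k - ?c")
        case 0
        then show ?thesis using pmf_nonneg[of "Pr s a" s'] by simp
      next
        case (Suc m)
        then have "k - (?c + 1) = m" by simp
        then show ?thesis using Suc by simp
      qed
      finally show ?thesis using ok cyl_prob_nonneg[of s0 Pr f w] unfolding Phi_def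
        by (simp add: mult_left_mono)
    qed
  qed
  finally show ?thesis .
qed

lemma cyl_single: "cyl_prob s0 Pr f [x] = (if x = (s0, f [s0]) then 1 else 0)"
  unfolding cyl_prob_def by (cases x) auto

lemma Phi_sum:
  assumes "T \<ge> 1"
  shows "(\<Sum>w\<in>LL T. Phi s0 Pr f N s a s' k (w :: ('s::finite \<times> 'a::finite) list))
     \<le> (1 - pmf (Pr s a) s') ^ k"
  using assms
proof (induction T)
  case 0
  then show ?case by simp
next
  case (Suc T)
  show ?case
  proof (cases T)
    case 0
    have "okw N s a s' [x]" "cnt N s a [x] = 0" for x :: "'s \<times> 'a"
      unfolding okw_def cnt_def occ_def by auto
    then have "(\<Sum>w\<in>LL (Suc T). Phi s0 Pr f N s a s' k (w :: ('s \<times> 'a) list))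
        = (\<Sum>x\<in>UNIV. (if x = (s0, f [s0]) then 1 else 0) * (1 - pmf (Pr s a) s') ^ k)"
      unfolding sum_LL_Suc 0 by (simp add: LL_def Phi_def cyl_single)
    also have "\<dots> = (1 - pmf (Pr s a) s') ^ k"
      by (simp add: if_distrib[where f="\<lambda>z. z * _"] cong: if_cong)
    finally show ?thesis by simp
  next
    case (Suc m)
    have "(\<Sum>w\<in>LL (Suc T). Phi s0 Pr f N s a s' k (w :: ('s \<times> 'a) list))
        = (\<Sum>w\<in>LL T. \<Sum>x\<in>UNIV. Phi s0 Pr f N s a s' k (w @ [x]))"
      by (rule sum_LL_Suc)
    also have "\<dots> \<le> (\<Sum>w\<in>LL T. Phi s0 Pr f N s a s' k w)"
      by (rule sum_mono, rule Phi_step) (use Suc in \<open>auto simp: LL_def\<close>)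
    also have "\<dots> \<le> (1 - pmf (Pr s a) s') ^ k"
      using Suc.IH Suc by simp
    finally show ?thesis .
  qed
qed

lemma bad_sum:
  assumes "T \<ge> 1"
  shows "(\<Sum>w\<in>{w \<in> LL T. okw N s a s' w \<and> k \<le> cnt N s a w}. cyl_prob s0 Pr f (w :: ('s::finite \<times> 'a::finite) list))
     \<le> (1 - pmf (Pr s a) s') ^ k"
proof -
  have "(\<Sum>w\<in>{w \<in> LL T. okw N s a s' w \<and> k \<le> cnt N s a w}. cyl_prob s0 Pr f w)
     = (\<Sum>w\<in>{w \<in> LL T. okw N s a s' w \<and> k \<le> cnt N s a w}. Phi s0 Pr f N s a s' k w)"
    by (rule sum.cong) (auto simp: Phi_def)
  also have "\<dots> \<le> (\<Sum>w\<in>LL T. Phi s0 Pr f N s a s' k w)"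
    by (rule sum_mono2) (auto simp: finite_LL Phi_nonneg)
  also have "\<dots> \<le> (1 - pmf (Pr s a) s') ^ k" by (rule Phi_sum[OF assms])
  finally show ?thesis .
qed



lemma cyl_pos_cond:
  assumes "cyl_prob s0 Pr f w \<noteq> 0"
  shows "fst (w ! 0) = s0" "\<And>i. i < length w \<Longrightarrow> snd (w ! i) = f (map fst (take (Suc i) w))"
    "\<And>i. i < length w - 1 \<Longrightarrow> pmf (Pr (fst (w ! i)) (snd (w ! i))) (fst (w ! Suc i)) \<noteq> 0"
proof -
  have c: "fst (w ! 0) = s0 \<and> (\<forall>i<length w. snd (w ! i) = f (map fst (take (Suc i) w)))"
    and p: "(\<Prod>i<length w - 1. pmf (Pr (fst (w ! i)) (snd (w ! i))) (fst (w ! Suc i))) \<noteq> 0"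
    using assms unfolding cyl_prob_def by (auto split: if_splits)
  show "fst (w ! 0) = s0" using c by simp
  show "\<And>i. i < length w \<Longrightarrow> snd (w ! i) = f (map fst (take (Suc i) w))" using c by simp
  show "\<And>i. i < length w - 1 \<Longrightarrow> pmf (Pr (fst (w ! i)) (snd (w ! i))) (fst (w ! Suc i)) \<noteq> 0"
    using p by (simp add: prod_zero_iff)
qed

locale chain =
  fixes s0 :: "'s::finite" and Tr :: "('s \<times> 'a::finite \<times> 's) set"
    and f :: "'s list \<Rightarrow> 'a" and Pr :: "'s \<Rightarrow> 'a \<Rightarrow> 's pmf"
    and M :: "('s \<times> 'a) stream measure"
  assumes pol: "is_policy Tr f" and st: "stochastic_for Tr Pr" and tm: "trace_measure s0 Pr f M"
begin

lemma prob: "prob_space M" using tm unfolding trace_measure_def by simp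

lemma sets_M: "sets M = sets (stream_space (count_space UNIV))"
  using tm unfolding trace_measure_def by simp

lemma space_M: "space M = space (stream_space (count_space UNIV))"
  using sets_eq_imp_space_eq[OF sets_M] .

lemma meas_pred:
  assumes "Measurable.pred (stream_space (count_space UNIV)) P"
  shows "{\<omega> \<in> space M. P \<omega>} \<in> sets M"
  using assms unfolding pred_def sets_M space_M .

lemma meas_stake: "{\<omega> \<in> space M. Q (stake n \<omega>)} \<in> sets M"
  by (rule meas_pred[OF pred_stake])

lemma cyl_emeasure: "w \<noteq> [] \<Longrightarrow>
  emeasure M {\<omega> \<in> space M. stake (length w) \<omega> = w} = ennreal (cyl_prob s0 Pr f w)"
  using tm unfolding trace_measure_def by simp

lemma emeasure_stake_set:
  assumes "n \<ge> 1"
  shows "emeasure M {\<omega> \<in> space M. Q (stake n \<omega>)} = ennreal (\<Sum>w\<in>{w\<in>LL n. Q w}. cyl_prob s0 Pr f w)"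
proof -
  let ?I = "{w\<in>LL n. Q w}"
  let ?F = "\<lambda>w. {\<omega> \<in> space M. stake (length w) \<omega> = w}"
  have eq: "{\<omega> \<in> space M. Q (stake n \<omega>)} = (\<Union>w\<in>?I. ?F w)"
    by (auto simp: LL_def)
  have "(\<Sum>w\<in>?I. emeasure M (?F w)) = emeasure M (\<Union>w\<in>?I. ?F w)"
  proof (rule sum_emeasure)
    show "?F ` ?I \<subseteq> sets M" using meas_stake by auto
    show "disjoint_family_on ?F ?I" by (auto simp: disjoint_family_on_def LL_def)
    show "finite ?I" by (rule finite_subset[OF _ finite_LL]) auto
  qed
  moreover have "(\<Sum>w\<in>?I. emeasure M (?F w)) = (\<Sum>w\<in>?I. ennreal (cyl_prob s0 Pr f w))"
    by (rule sum.cong[OF refl], rule cyl_emeasure) (use assms in \<open>auto simp: LL_def\<close>)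
  ultimately show ?thesis unfolding eq by (simp add: cyl_prob_nonneg)
qed

lemma AE_cyl0: "AE \<omega> in M. \<forall>w. w \<noteq> [] \<and> cyl_prob s0 Pr f w = 0 \<longrightarrow> stake (length w) \<omega> \<noteq> w"
proof (subst AE_all_countable, intro allI)
  fix w :: "('s \<times> 'a) list"
  show "AE \<omega> in M. w \<noteq> [] \<and> cyl_prob s0 Pr f w = 0 \<longrightarrow> stake (length w) \<omega> \<noteq> w"
  proof (cases "w \<noteq> [] \<and> cyl_prob s0 Pr f w = 0")
    case True
    show ?thesis
    proof (rule AE_I')
      show "{\<omega> \<in> space M. stake (length w) \<omega> = w} \<in> null_sets M"
        using True cyl_emeasure[of w] meas_stake by (auto simp: null_sets_def)
    qed auto
  next
    case False
    then show ?thesis by auto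
  qed
qed

lemma AE_trace: "AE \<omega> in M. inf_f_trace s0 Tr f \<omega>"
  using AE_cyl0
proof (rule eventually_mono)
  fix \<omega> :: "('s \<times> 'a) stream"
  assume H: "\<forall>w. w \<noteq> [] \<and> cyl_prob s0 Pr f w = 0 \<longrightarrow> stake (length w) \<omega> \<noteq> w"
  have nz: "cyl_prob s0 Pr f (stake (Suc n) \<omega>) \<noteq> 0" for n
    using H[rule_format, of "stake (Suc n) \<omega>"] by auto
  have act: "snd (\<omega> !! i) = f (map fst (stake (Suc i) \<omega>))" for i
    using cyl_pos_cond(2)[OF nz[of i], of i] by (simp del: stake.simps(2))
  show "inf_f_trace s0 Tr f \<omega>"
    unfolding inf_f_trace_def
  proof (intro conjI allI)
    show "fst (\<omega> !! 0) = s0" using cyl_pos_cond(1)[OF nz[of 0]] by simp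
    show "snd (\<omega> !! i) = f (map fst (stake (Suc i) \<omega>))" for i by (rule act)
    fix i
    have pm: "pmf (Pr (fst (\<omega> !! i)) (snd (\<omega> !! i))) (fst (\<omega> !! Suc i)) \<noteq> 0"
      using cyl_pos_cond(3)[OF nz[of "Suc i"], of i] by (simp del: stake.simps(2))
    have la: "last (map fst (stake (Suc i) \<omega>)) = fst (\<omega> !! i)"
      by (simp add: stake_Suc del: stake.simps(2))
    have ne: "map fst (stake (Suc i) \<omega>) \<noteq> []" by simp
    have "applicable Tr (fst (\<omega> !! i)) (snd (\<omega> !! i))"
      using pol ne unfolding is_policy_def act la[symmetric] by blast
    then have "set_pmf (Pr (fst (\<omega> !! i)) (snd (\<omega> !! i))) = {s'. (fst (\<omega> !! i), snd (\<omega> !! i), s') \<in> Tr}"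
      using st unfolding stochastic_for_def by simp
    then show "(fst (\<omega> !! i), snd (\<omega> !! i), fst (\<omega> !! Suc i)) \<in> Tr"
      using pm by (metis mem_Collect_eq set_pmf_iff)
  qed
qed

end



context chain
begin

lemma cnt_stake_mono: "T \<le> T' \<Longrightarrow> cnt N s a (stake T \<omega>) \<le> cnt N s a (stake T' \<omega>)"
  unfolding cnt_def by (rule card_mono[OF finite_occ]) (auto simp: occ_stake)

lemma null_Z:
  assumes p: "pmf (Pr s a) s' > 0"
  shows "AE \<omega> in M. \<not> (infinite {i. \<omega> !! i = (s, a)} \<and> (\<forall>i. N \<le> i \<longrightarrow> \<omega> !! i = (s, a) \<longrightarrow> fst (\<omega> !! Suc i) \<noteq> s'))"
proof -
  interpret prob_space M by (rule prob)
  let ?q = "1 - pmf (Pr s a) s'"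
  have q0: "0 \<le> ?q" using pmf_le_1[of "Pr s a" s'] by simp
  have q1: "?q < 1" using p by simp
  define Ob where "Ob = {\<omega> \<in> space M. \<forall>i. (\<lambda>w. N \<le> i \<longrightarrow> w ! i = (s, a) \<longrightarrow> fst (w ! Suc i) \<noteq> s') (stake (Suc (Suc i)) \<omega>)}"
  have Ob_alt: "Ob = {\<omega> \<in> space M. \<forall>i. N \<le> i \<longrightarrow> \<omega> !! i = (s, a) \<longrightarrow> fst (\<omega> !! Suc i) \<noteq> s'}"
    unfolding Ob_def by (simp del: stake.simps(2))
  have Ob_meas: "Ob \<in> sets M" unfolding Ob_def
    by (rule meas_pred) (intro pred_intros_countable pred_stake)
  define A where "A k T = Ob \<inter> {\<omega> \<in> space M. k \<le> cnt N s a (stake T \<omega>)}" for k T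
  have A_meas: "A k T \<in> sets M" for k T unfolding A_def
    using Ob_meas meas_stake[of "\<lambda>w. k \<le> cnt N s a w" T] by (rule sets.Int)
  have A_inc: "incseq (A k)" for k
    unfolding incseq_def A_def using cnt_stake_mono by (auto intro: order.trans[OF _ cnt_stake_mono])
  have A_le: "emeasure M (A k T) \<le> ennreal (?q ^ k)" for k T
  proof -
    have "A k T \<subseteq> {\<omega> \<in> space M. (\<lambda>w. okw N s a s' w \<and> k \<le> cnt N s a w) (stake (Suc T) \<omega>)}"
    proof
      fix \<omega> assume "\<omega> \<in> A k T"
      then have "\<omega> \<in> space M" "\<forall>i. N \<le> i \<longrightarrow> \<omega> !! i = (s, a) \<longrightarrow> fst (\<omega> !! Suc i) \<noteq> s'"
        "k \<le> cnt N s a (stake T \<omega>)" unfolding A_def Ob_alt by auto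
      moreover have "cnt N s a (stake T \<omega>) \<le> cnt N s a (stake (Suc T) \<omega>)" by (rule cnt_stake_mono) simp
      moreover have "okw N s a s' (stake (Suc T) \<omega>)"
        using calculation(2) unfolding okw_def occ_stake by (auto simp del: stake.simps(2))
      ultimately show "\<omega> \<in> {\<omega> \<in> space M. (\<lambda>w. okw N s a s' w \<and> k \<le> cnt N s a w) (stake (Suc T) \<omega>)}"
        by auto
    qed
    then have "emeasure M (A k T) \<le> emeasure M {\<omega> \<in> space M. (\<lambda>w. okw N s a s' w \<and> k \<le> cnt N s a w) (stake (Suc T) \<omega>)}"
      by (rule emeasure_mono[OF _ meas_stake])
    also have "\<dots> = ennreal (\<Sum>w\<in>{w\<in>LL (Suc T). okw N s a s' w \<and> k \<le> cnt N s a w}. cyl_prob s0 Pr f w)"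
      by (rule emeasure_stake_set) simp
    also have "\<dots> \<le> ennreal (?q ^ k)"
      using bad_sum[where T="Suc T" and N=N and s=s and a=a and s'=s' and k=k and s0=s0 and Pr=Pr and f=f] by (simp add: ennreal_leI)
    finally show ?thesis .
  qed
  define X where "X = (\<Inter>k. \<Union>T. A k T)"
  have X_meas: "X \<in> sets M" unfolding X_def using A_meas by auto
  have X_le: "measure M X \<le> ?q ^ k" for k
  proof -
    have "emeasure M X \<le> emeasure M (\<Union>T. A k T)"
      unfolding X_def by (rule emeasure_mono) (use A_meas in auto)
    also have "\<dots> = (SUP T. emeasure M (A k T))"
      by (rule SUP_emeasure_incseq[symmetric]) (use A_meas A_inc in auto)
    also have "\<dots> \<le> ennreal (?q ^ k)" by (rule SUP_least) (rule A_le)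
    finally show ?thesis using q0 by (simp add: emeasure_eq_measure)
  qed
  have "measure M X \<le> 0"
  proof (rule LIMSEQ_le_const)
    show "(\<lambda>k. ?q ^ k) \<longlonglongrightarrow> 0" using q0 q1 by (intro LIMSEQ_power_zero) simp
    show "\<exists>N. \<forall>n\<ge>N. measure M X \<le> ?q ^ n" using X_le by auto
  qed
  then have "measure M X = 0" using measure_nonneg[of M X] by simp
  then have X_null: "X \<in> null_sets M" using X_meas by (simp add: emeasure_eq_measure null_sets_def)
  show ?thesis
  proof (rule AE_I'[OF X_null])
    show "{\<omega> \<in> space M. \<not> \<not> (infinite {i. \<omega> !! i = (s, a)} \<and> (\<forall>i. N \<le> i \<longrightarrow> \<omega> !! i = (s, a) \<longrightarrow> fst (\<omega> !! Suc i) \<noteq> s'))} \<subseteq> X"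
    proof (rule subsetI)
      fix \<omega> assume "\<omega> \<in> {\<omega> \<in> space M. \<not> \<not> (infinite {i. \<omega> !! i = (s, a)} \<and> (\<forall>i. N \<le> i \<longrightarrow> \<omega> !! i = (s, a) \<longrightarrow> fst (\<omega> !! Suc i) \<noteq> s'))}"
      then have sp: "\<omega> \<in> space M" and inf: "infinite {i. \<omega> !! i = (s, a)}"
        and ok: "\<forall>i. N \<le> i \<longrightarrow> \<omega> !! i = (s, a) \<longrightarrow> fst (\<omega> !! Suc i) \<noteq> s'"
        by auto
      have inf2: "infinite {i. N \<le> i \<and> \<omega> !! i = (s, a)}"
      proof
        assume "finite {i. N \<le> i \<and> \<omega> !! i = (s, a)}"
        then have "finite ({i. N \<le> i \<and> \<omega> !! i = (s, a)} \<union> {..<N})" by simp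
        moreover have "{i. \<omega> !! i = (s, a)} \<subseteq> {i. N \<le> i \<and> \<omega> !! i = (s, a)} \<union> {..<N}" by auto
        ultimately show False using inf finite_subset by blast
      qed
      show "\<omega> \<in> X" unfolding X_def
      proof (rule INT_I)
        fix k :: nat assume "k \<in> UNIV"
        obtain B where B: "finite B" "card B = k" "B \<subseteq> {i. N \<le> i \<and> \<omega> !! i = (s, a)}"
          using infinite_arbitrarily_large[OF inf2] by blast
        define T where "T = Suc (Suc (Sup B))"
        have BS: "B \<subseteq> {i. occ N s a (stake T \<omega>) i}"
        proof
          fix i assume "i \<in> B"
          then have "i \<le> Sup B" using B(1) by (simp add: le_cSup_finite)
          then show "i \<in> {i. occ N s a (stake T \<omega>) i}" using B(3) \<open>i \<in> B\<close>
            unfolding occ_stake T_def by auto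
        qed
        then have "k \<le> cnt N s a (stake T \<omega>)" unfolding cnt_def using B(2) card_mono[OF finite_occ BS] by simp
        then have "\<omega> \<in> A k T" unfolding A_def Ob_alt using sp ok by auto
        then show "\<omega> \<in> (\<Union>T. A k T)" by blast
      qed
    qed
  qed
qed

lemma AE_fair: "AE \<omega> in M. sa_fair Tr \<omega>"
  unfolding sa_fair_def
proof (subst AE_all_countable, intro allI, subst AE_all_countable, intro allI, subst AE_all_countable, intro allI)
  fix s :: 's and a :: 'a and s' :: 's
  show "AE \<omega> in M. (s, a, s') \<in> Tr \<longrightarrow> infinite {i. \<omega> !! i = (s, a)} \<longrightarrow>
      infinite {i. \<omega> !! i = (s, a) \<and> fst (\<omega> !! Suc i) = s'}"
  proof (cases "(s, a, s') \<in> Tr")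
    case False
    then show ?thesis by simp
  next
    case True
    then have "applicable Tr s a" unfolding applicable_def by auto
    then have "set_pmf (Pr s a) = {s'. (s, a, s') \<in> Tr}" using st unfolding stochastic_for_def by simp
    then have "pmf (Pr s a) s' \<noteq> 0" using True by (simp add: set_pmf_iff[symmetric])
    then have p: "pmf (Pr s a) s' > 0" using pmf_nonneg[of "Pr s a" s'] by linarith
    have "AE \<omega> in M. \<forall>N. \<not> (infinite {i. \<omega> !! i = (s, a)} \<and> (\<forall>i. N \<le> i \<longrightarrow> \<omega> !! i = (s, a) \<longrightarrow> fst (\<omega> !! Suc i) \<noteq> s'))"
      using null_Z[OF p] by (subst AE_all_countable) blast
    then show ?thesis
    proof (rule eventually_mono, intro impI)
      fix \<omega> :: "('s \<times> 'a) stream"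
      assume H: "\<forall>N. \<not> (infinite {i. \<omega> !! i = (s, a)} \<and> (\<forall>i. N \<le> i \<longrightarrow> \<omega> !! i = (s, a) \<longrightarrow> fst (\<omega> !! Suc i) \<noteq> s'))"
        and inf: "infinite {i. \<omega> !! i = (s, a)}"
      show "infinite {i. \<omega> !! i = (s, a) \<and> fst (\<omega> !! Suc i) = s'}"
      proof
        assume fin: "finite {i. \<omega> !! i = (s, a) \<and> fst (\<omega> !! Suc i) = s'}"
        obtain N where N: "{i. \<omega> !! i = (s, a) \<and> fst (\<omega> !! Suc i) = s'} \<subseteq> {..<N}"
          using finite_nat_bounded[OF fin] by blast
        have "\<forall>i. N \<le> i \<longrightarrow> \<omega> !! i = (s, a) \<longrightarrow> fst (\<omega> !! Suc i) \<noteq> s'"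
          using N by auto
        then show False using H inf by blast
      qed
    qed
  qed
qed

end


theorem proposition2:
  fixes s0 :: "'f::finite set"
    and Tr :: "('f set \<times> 'v::finite set \<times> 'f set) set"
    and f :: "'f set list \<Rightarrow> 'v set"
    and \<psi> :: "('f + 'v) goal"
  assumes "planning_domain Tr"
    and "is_policy Tr f"
    and "finite_state_policy f"
    and "A_sa_fair s0 Tr f \<psi>"
  shows "A_almost_sure s0 Tr f \<psi>"
  unfolding A_almost_sure_def
proof (intro allI impI)
  fix Pr M
  assume st: "stochastic_for Tr Pr" and tm: "trace_measure s0 Pr f M"
  interpret chain s0 Tr f Pr M
    using assms(2) st tm by unfold_locales
  interpret prob_space M by (rule prob)
  have meas: "{\<omega> \<in> space M. inf_f_trace s0 Tr f \<omega> \<and> trace_sat \<psi> \<omega>} \<in> sets M"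
    by (rule meas_pred) (intro pred_intros_logic pred_trace pred_goal)
  have "AE \<omega> in M. \<omega> \<in> {\<omega> \<in> space M. inf_f_trace s0 Tr f \<omega> \<and> trace_sat \<psi> \<omega>}"
    using AE_trace AE_fair AE_space
  proof eventually_elim
    case (elim \<omega>)
    then show ?case using assms(4) unfolding A_sa_fair_def by auto
  qed
  then show "emeasure M {\<omega> \<in> space M. inf_f_trace s0 Tr f \<omega> \<and> trace_sat \<psi> \<omega>} = 1"
    by (rule emeasure_eq_1_AE[OF meas])
qed

end
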